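(* The critical discrete functional equation $(DFE_c)$, i.e. $u(x)=\min_{e\in\mathbf E_x}\big(u(\mathrm t(e))+\sigma_c(-e)\big)$ for all $x\in\mathbf V$, admits a solution $u:\mathbf V\to\mathbb R$.
   Context: Network $\Gamma=\bigcup_{\gamma\in\mathcal E}\gamma([0,1])\subset\mathbb R^N$, $\mathcal E$ finite set of regular simple oriented arcs (possibly closed, $\mathcal E^*$ = closed arcs), closed under inversion $\tilde\gamma(s)=\gamma(1-s)$, interiors pairwise disjoint except $\gamma,\tilde\gamma$; vertices $\mathbf V$ = endpoints; $\Gamma$ connected. Hamiltonians $H_\gamma:[0,1]\times\mathbb R\to\mathbb R$, $H_{\tilde\gamma}(s,p)=H_\gamma(1-s,-p)$, continuous, coercive in $p$, quasiconvex in $p$ with $\mathrm{Int}\{H_\gamma(s,\cdot)\le b\}=\{H_\gamma(s,\cdot)<b\}$. $a_\gamma=\max_s\min_pH_\gamma(s,p)$; $c_\gamma$ = least $a$ such that $H_\gamma(s,u')=a$ has a viscosity subsolution in $(0,1)$, continuous on $[0,1]$, with $u(0)=u(1)$; $a_0=\max\{\max_{\gamma\in\mathcal E\setminus\mathcal E^*}a_\gamma,\max_{\gamma\in\mathcal E^*}c_\gamma\}$; assume $s\mapsto\min_pH_\gamma(s,p)$ is constant whenever $a_\gamma=a_0$. Graph $\mathbf X=(\mathbf V,\mathbf E)$ with bijection $\Psi:\mathbf E\to\mathcal E$, $\mathrm o(e)=\Psi(e)(0)$, $\mathrm t(e)=\Psi(e)(1)$, $-e=\Psi^{-1}(\widetilde{\Psi(e)})$,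 $\mathbf E_x=\{e:\mathrm o(e)=x\}$; for $a\ge a_0$, $\sigma_a(e)=\int_0^1\max\{p:H_{\Psi(e)}(t,p)=a\}\,dt$. A subsolution of $(DFE_a)$ is $u$ with $u(\mathrm t(e))-u(\mathrm o(e))\le\sigma_a(e)$ for all $e$; the critical value is $c=\min\{a\ge a_0:(DFE_a)$ admits a subsolution$\}$ (this minimum exists). *)

theory Defs
  imports "HOL-Analysis.Analysis"
begin

text \<open>Abstract network: a finite set E of oriented arcs (edges), with origin
  src, terminal point tgt, inversion rv (e \<mapsto> -e), and a Hamiltonian H e on
  each arc, H e :: [0,1] \<times> R \<rightarrow> R.  Closed arcs are those with src e = tgt e.\<close>

definition vertices :: "'e set \<Rightarrow> ('e \<Rightarrow> 'v) \<Rightarrow> ('e \<Rightarrow> 'v) \<Rightarrow> 'v set" where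
  "vertices E src tgt = src ` E \<union> tgt ` E"

definition out_edges :: "'e set \<Rightarrow> ('e \<Rightarrow> 'v) \<Rightarrow> 'v \<Rightarrow> 'e set" where
  "out_edges E src x = {e \<in> E. src e = x}"

definition ham_ok :: "(real \<Rightarrow> real \<Rightarrow> real) \<Rightarrow> bool" where
  "ham_ok h \<longleftrightarrow>
     continuous_on ({0..1} \<times> UNIV) (\<lambda>(s,p). h s p)
   \<and> (\<forall>M. \<exists>R. \<forall>s\<in>{0..1}. \<forall>p. \<bar>p\<bar> \<ge> R \<longrightarrow> h s p \<ge> M)
   \<and> (\<forall>s\<in>{0..1}. \<forall>b. convex {p. h s p \<le> b})
   \<and> (\<forall>s\<in>{0..1}. \<forall>b. interior {p. h s p \<le> b} = {p. h s p < b})"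

definition network_ok ::
  "'e set \<Rightarrow> ('e \<Rightarrow> 'v) \<Rightarrow> ('e \<Rightarrow> 'v) \<Rightarrow> ('e \<Rightarrow> 'e) \<Rightarrow> ('e \<Rightarrow> real \<Rightarrow> real \<Rightarrow> real) \<Rightarrow> bool" where
  "network_ok E src tgt rv H \<longleftrightarrow>
     finite E \<and> E \<noteq> {}
   \<and> (\<forall>e\<in>E. rv e \<in> E \<and> rv (rv e) = e \<and> rv e \<noteq> e
            \<and> src (rv e) = tgt e \<and> tgt (rv e) = src e)
   \<and> (\<forall>e\<in>E. \<forall>s p. H (rv e) s p = H e (1 - s) (- p))
   \<and> (\<forall>e\<in>E. ham_ok (H e))
   \<and> (\<forall>x\<in>vertices E src tgt. \<forall>y\<in>vertices E src tgt.
        (x, y) \<in> {(src e, tgt e) | e. e \<in> E}\<^sup>*)"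

definition a_arc :: "(real \<Rightarrow> real \<Rightarrow> real) \<Rightarrow> real" where
  "a_arc h = (SUP s\<in>{0..1}. INF p. h s p)"

definition visc_subsol :: "(real \<Rightarrow> real \<Rightarrow> real) \<Rightarrow> real \<Rightarrow> (real \<Rightarrow> real) \<Rightarrow> bool" where
  "visc_subsol h a u \<longleftrightarrow>
     (\<forall>s\<in>{0<..<1}. \<forall>\<phi> \<phi>'.
        (\<forall>x\<in>{0<..<1}. (\<phi> has_real_derivative \<phi>' x) (at x))
      \<and> continuous_on {0<..<1} \<phi>'
      \<and> (\<exists>\<delta>>0. \<forall>y\<in>{0<..<1}. \<bar>y - s\<bar> < \<delta> \<longrightarrow> u y - \<phi> y \<le> u s - \<phi> s)
      \<longrightarrow> h s (\<phi>' s) \<le> a)"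

definition c_arc :: "(real \<Rightarrow> real \<Rightarrow> real) \<Rightarrow> real" where
  "c_arc h = Inf {a. \<exists>u. continuous_on {0..1} u \<and> u 0 = u 1 \<and> visc_subsol h a u}"

definition a_zero ::
  "'e set \<Rightarrow> ('e \<Rightarrow> 'v) \<Rightarrow> ('e \<Rightarrow> 'v) \<Rightarrow> ('e \<Rightarrow> real \<Rightarrow> real \<Rightarrow> real) \<Rightarrow> real" where
  "a_zero E src tgt H =
     Max ((\<lambda>e. a_arc (H e)) ` {e \<in> E. src e \<noteq> tgt e}
        \<union> (\<lambda>e. c_arc (H e)) ` {e \<in> E. src e = tgt e})"

definition sigma :: "('e \<Rightarrow> real \<Rightarrow> real \<Rightarrow> real) \<Rightarrow> real \<Rightarrow> 'e \<Rightarrow> real" where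
  "sigma H a e = integral {0..1} (\<lambda>t. Sup {p. H e t p = a})"

definition DFE_subsol ::
  "'e set \<Rightarrow> ('e \<Rightarrow> 'v) \<Rightarrow> ('e \<Rightarrow> 'v) \<Rightarrow> ('e \<Rightarrow> real \<Rightarrow> real \<Rightarrow> real) \<Rightarrow> real \<Rightarrow> ('v \<Rightarrow> real) \<Rightarrow> bool" where
  "DFE_subsol E src tgt H a u \<longleftrightarrow>
     (\<forall>e\<in>E. u (tgt e) - u (src e) \<le> sigma H a e)"

definition crit_value ::
  "'e set \<Rightarrow> ('e \<Rightarrow> 'v) \<Rightarrow> ('e \<Rightarrow> 'v) \<Rightarrow> ('e \<Rightarrow> real \<Rightarrow> real \<Rightarrow> real) \<Rightarrow> real" where
  "crit_value E src tgt H =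
     Inf {a. a \<ge> a_zero E src tgt H \<and> (\<exists>u. DFE_subsol E src tgt H a u)}"

end

theory Submission
  imports Defs
begin


definition PM :: "(real \<Rightarrow> real \<Rightarrow> real) \<Rightarrow> real \<Rightarrow> real \<Rightarrow> real" where
  "PM h t b = Sup {p. h t p = b}"

lemma ham_cont_p:
  assumes "ham_ok h" "s \<in> {0..1}"
  shows "continuous_on UNIV (h s)"
proof -
  have c: "continuous_on ({0..1} \<times> UNIV) (\<lambda>(s,p). h s p)" using assms(1) unfolding ham_ok_def by blast
  have "continuous_on UNIV (\<lambda>p. (\<lambda>(s,p). h s p) (s,p))"
    by (rule continuous_on_compose2[OF c]) (use assms(2) in \<open>auto intro!: continuous_intros\<close>)
  then show ?thesis by simp
qed

lemma ham_cont_s: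
  assumes "ham_ok h"
  shows "continuous_on {0..1} (\<lambda>s. h s p)"
proof -
  have c: "continuous_on ({0..1} \<times> UNIV) (\<lambda>(s,p). h s p)" using assms(1) unfolding ham_ok_def by blast
  have "continuous_on {0..1} (\<lambda>s. (\<lambda>(s,p). h s p) (s,p))"
    by (rule continuous_on_compose2[OF c]) (auto intro!: continuous_intros)
  then show ?thesis by simp
qed

lemma ham_coerc:
  assumes "ham_ok h"
  shows "\<exists>R. \<forall>s\<in>{0..1}. \<forall>p. \<bar>p\<bar> \<ge> R \<longrightarrow> h s p \<ge> M"
  using assms unfolding ham_ok_def by blast

lemma ham_bdd_box:
  assumes "ham_ok h"
  shows "\<exists>B. \<forall>s\<in>{0..1}. \<forall>p. \<bar>p\<bar> \<le> r \<longrightarrow> \<bar>h s p\<bar> \<le> B"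
proof -
  have c: "continuous_on ({0..1} \<times> UNIV) (\<lambda>(s,p). h s p)" using assms(1) unfolding ham_ok_def by blast
  let ?K = "{0..1::real} \<times> {-r..r}"
  have "compact ?K" by (intro compact_Times) auto
  moreover have "continuous_on ?K (\<lambda>(s,p). h s p)" by (rule continuous_on_subset[OF c]) auto
  ultimately have "compact ((\<lambda>(s,p). h s p) ` ?K)" by (rule compact_continuous_image[rotated])
  then have "bounded ((\<lambda>(s,p). h s p) ` ?K)" by (rule compact_imp_bounded)
  then obtain B where "\<forall>x\<in>(\<lambda>(s,p). h s p) ` ?K. \<bar>x\<bar> \<le> B" unfolding bounded_real by blast
  then show ?thesis by force
qed

lemma ham_lower:
  assumes "ham_ok h"
  shows "\<exists>L. \<forall>s\<in>{0..1}. \<forall>p. L \<le> h s p"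
proof -
  obtain R where R: "\<forall>s\<in>{0..1}. \<forall>p. \<bar>p\<bar> \<ge> R \<longrightarrow> h s p \<ge> 0" using ham_coerc[OF assms] by blast
  obtain B where B: "\<forall>s\<in>{0..1}. \<forall>p. \<bar>p\<bar> \<le> R \<longrightarrow> \<bar>h s p\<bar> \<le> B" using ham_bdd_box[OF assms] by blast
  show ?thesis
  proof (intro exI[of _ "min 0 (-B)"] ballI allI)
    fix s p assume s: "s \<in> {0..1::real}"
    show "min 0 (-B) \<le> h s p"
    proof (cases "\<bar>p\<bar> \<ge> R")
      case True then show ?thesis using R s by force
    next
      case False
      then have "\<bar>h s p\<bar> \<le> B" using B s by auto
      then show ?thesis by linarith
    qed
  qed
qed

lemma ham_argmin:
  assumes "ham_ok h" "s \<in> {0..1}"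
  shows "\<exists>p0. \<forall>p. h s p0 \<le> h s p"
proof -
  obtain R where R: "\<forall>s'\<in>{0..1}. \<forall>p. \<bar>p\<bar> \<ge> R \<longrightarrow> h s' p \<ge> h s 0 + 1" using ham_coerc[OF assms(1), of "h s 0 + 1"] by blast
  have "continuous_on {-\<bar>R\<bar>..\<bar>R\<bar>} (h s)" using ham_cont_p[OF assms] continuous_on_subset by blast
  then obtain p0 where p0: "p0 \<in> {-\<bar>R\<bar>..\<bar>R\<bar>}" "\<forall>y\<in>{-\<bar>R\<bar>..\<bar>R\<bar>}. h s p0 \<le> h s y"
    using continuous_attains_inf[of "{-\<bar>R\<bar>..\<bar>R\<bar>}" "h s"] by auto
  show ?thesis
  proof (intro exI allI)
    fix p
    show "h s p0 \<le> h s p"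
    proof (cases "\<bar>p\<bar> \<le> \<bar>R\<bar>")
      case True then show ?thesis using p0 by (auto simp: abs_le_iff)
    next
      case False
      then have "h s p \<ge> h s 0 + 1" using R assms(2) by auto
      moreover have "h s p0 \<le> h s 0" using p0 by auto
      ultimately show ?thesis by simp
    qed
  qed
qed

lemma ham_bdd_below:
  assumes "ham_ok h" "s \<in> {0..1}"
  shows "bdd_below (range (h s))"
proof -
  obtain L where "\<forall>s\<in>{0..1}. \<forall>p. L \<le> h s p" using ham_lower[OF assms(1)] by blast
  then show ?thesis using assms(2) unfolding bdd_below_def by blast
qed

lemma ham_inf_le:
  assumes "ham_ok h" "s \<in> {0..1}"
  shows "(INF p. h s p) \<le> h s p"
  by (rule cINF_lower[OF ham_bdd_below[OF assms]]) simp

lemma ham_good_iff: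
  assumes "ham_ok h" "s \<in> {0..1}"
  shows "(\<exists>p. h s p \<le> b) \<longleftrightarrow> (INF p. h s p) \<le> b"
proof
  assume "\<exists>p. h s p \<le> b" then show "(INF p. h s p) \<le> b" using ham_inf_le[OF assms] by (meson order_trans)
next
  assume a: "(INF p. h s p) \<le> b"
  obtain p0 where p0: "\<forall>p. h s p0 \<le> h s p" using ham_argmin[OF assms] by blast
  have "h s p0 \<le> (INF p. h s p)" by (rule cINF_greatest) (use p0 in auto)
  then show "\<exists>p. h s p \<le> b" using a by (intro exI[of _ p0]) linarith
qed

lemma ham_strict_iff:
  assumes "ham_ok h" "s \<in> {0..1}"
  shows "(\<exists>p. h s p < b) \<longleftrightarrow> (INF p. h s p) < b"
proof
  assume "\<exists>p. h s p < b" then show "(INF p. h s p) < b" using ham_inf_le[OF assms] by (meson le_less_trans)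
next
  assume a: "(INF p. h s p) < b"
  obtain p0 where p0: "\<forall>p. h s p0 \<le> h s p" using ham_argmin[OF assms] by blast
  have "h s p0 \<le> (INF p. h s p)" by (rule cINF_greatest) (use p0 in auto)
  then show "\<exists>p. h s p < b" using a by (intro exI[of _ p0]) linarith
qed

lemma ham_convex_btw:
  assumes "ham_ok h" "s \<in> {0..1}" "h s x \<le> b" "h s y \<le> b" "x \<le> z" "z \<le> y"
  shows "h s z \<le> b"
proof -
  have "convex {p. h s p \<le> b}" using assms(1,2) unfolding ham_ok_def by blast
  then have "is_interval {p. h s p \<le> b}" by (simp add: is_interval_convex_1)
  then show ?thesis using assms(3-6) unfolding is_interval_1 by blast
qed

lemma PM_main:
  assumes "ham_ok h" "s \<in> {0..1}" "\<exists>p. h s p \<le> b"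
  shows "h s (PM h s b) = b" "\<And>p. h s p \<le> b \<Longrightarrow> p \<le> PM h s b"
proof -
  let ?L = "{p. h s p \<le> b}"
  have ch: "continuous_on UNIV (h s)" by (rule ham_cont_p[OF assms(1,2)])
  obtain R where R: "\<forall>s\<in>{0..1}. \<forall>p. \<bar>p\<bar> \<ge> R \<longrightarrow> h s p \<ge> b + 1" using ham_coerc[OF assms(1)] by blast
  have bdd: "bdd_above ?L"
    unfolding bdd_above_def
  proof (intro exI[of _ "\<bar>R\<bar>"] ballI)
    fix x assume "x \<in> ?L"
    then have "\<not> (\<bar>x\<bar> \<ge> R)" using R assms(2) by force
    then show "x \<le> \<bar>R\<bar>" by linarith
  qed
  have cl: "closed ?L" using ch by (intro closed_Collect_le) (auto intro: continuous_on_subset)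
  have ne: "?L \<noteq> {}" using assms(3) by auto
  define q where "q = Sup ?L"
  have qL: "q \<in> ?L" unfolding q_def by (rule closed_contains_Sup[OF ne bdd cl])
  have ub: "\<And>p. h s p \<le> b \<Longrightarrow> p \<le> q" unfolding q_def using bdd by (auto intro: cSup_upper)
  have hq: "h s q = b"
  proof (rule ccontr)
    assume "h s q \<noteq> b"
    then have lt: "h s q < b" using qL by auto
    have "isCont (h s) q" using ch by (simp add: continuous_on_eq_continuous_at)
    then obtain d where d: "d > 0" "\<forall>y. dist y q < d \<longrightarrow> dist (h s y) (h s q) < b - h s q"
      using lt unfolding continuous_at_eps_delta by (metis diff_gt_0_iff_gt)
    have "dist (q + d/2) q < d" using d by (simp add: dist_real_def)
    then have "h s (q + d/2) < b" using d(2) by (auto simp: dist_real_def abs_less_iff)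
    then have "q + d/2 \<le> q" using ub[of "q + d/2"] by simp
    then show False using d by simp
  qed
  have "PM h s b = q" unfolding PM_def
    by (rule cSup_eq_maximum) (use hq ub in auto)
  then show "h s (PM h s b) = b" "\<And>p. h s p \<le> b \<Longrightarrow> p \<le> PM h s b" using hq ub by auto
qed


lemma ex_le_mono: "\<exists>p. f p \<le> (b1::real) \<Longrightarrow> b1 \<le> b2 \<Longrightarrow> \<exists>p. f p \<le> b2"
  by (meson order_trans)
lemma ex_lt_le: "\<exists>p. f p < (b::real) \<Longrightarrow> \<exists>p. f p \<le> b"
  by (meson less_imp_le)

lemma PM_mono:
  assumes "ham_ok h" "s \<in> {0..1}" "\<exists>p. h s p \<le> b1" "b1 \<le> b2"
  shows "PM h s b1 \<le> PM h s b2"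
proof -
  have g2: "\<exists>p. h s p \<le> b2" using ex_le_mono[OF assms(3,4)] .
  show ?thesis using PM_main(1)[OF assms(1-3)] assms(4) by (intro PM_main(2)[OF assms(1,2) g2]) simp
qed

lemma PM_approach:
  assumes "ham_ok h" "s \<in> {0..1}" "\<exists>p. h s p < b" "e > 0"
  shows "\<exists>r. h s r < b \<and> r > PM h s b - e"
proof -
  let ?L = "{p. h s p \<le> b}"
  have cv: "convex ?L" and int: "interior ?L = {p. h s p < b}"
    using assms(1,2) unfolding ham_ok_def by blast+
  have g: "\<exists>p. h s p \<le> b" using ex_lt_le[OF assms(3)] .
  have "interior ?L \<noteq> {}" using int assms(3) by auto
  then have "closure (interior ?L) = closure ?L" by (rule convex_closure_interior[OF cv])
  moreover have "PM h s b \<in> closure ?L" using PM_main(1)[OF assms(1,2) g] closure_subset by fastforce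
  ultimately have "PM h s b \<in> closure {p. h s p < b}" using int by simp
  then obtain r where "r \<in> {p. h s p < b}" "dist r (PM h s b) < e"
    using assms(4) unfolding closure_approachable by blast
  then show ?thesis by (intro exI[of _ r]) (auto simp: dist_real_def abs_less_iff)
qed



lemma PM_right:
  assumes "ham_ok h" "s \<in> {0..1}" "\<exists>p. h s p \<le> b" "\<And>k. a k \<ge> b" "a \<longlonglongrightarrow> b"
  shows "(\<lambda>k. PM h s (a k)) \<longlonglongrightarrow> PM h s b"
proof (rule LIMSEQ_I)
  fix e :: real assume e: "e > 0"
  let ?P = "PM h s b" let ?q = "PM h s b + e/2"
  have hP: "h s ?P = b" by (rule PM_main(1)[OF assms(1-3)])
  have hq: "h s ?q > b"
  proof (rule ccontr)
    assume "\<not> h s ?q > b"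
    then have "?q \<le> ?P" using PM_main(2)[OF assms(1-3), of ?q] by simp
    then show False using e by simp
  qed
  have "\<forall>\<^sub>F k in sequentially. a k < h s ?q" using assms(5) hq by (rule order_tendstoD(2))
  then obtain N where N: "\<And>k. k \<ge> N \<Longrightarrow> a k < h s ?q" unfolding eventually_sequentially by blast
  show "\<exists>N. \<forall>k\<ge>N. norm (PM h s (a k) - ?P) < e"
  proof (intro exI allI impI)
    fix k assume k: "k \<ge> N"
    have gk: "\<exists>p. h s p \<le> a k" using ex_le_mono[OF assms(3,4)] .
    have lo: "?P \<le> PM h s (a k)" by (rule PM_mono[OF assms(1-3) assms(4)])
    have up: "PM h s (a k) < ?q"
    proof (rule ccontr)
      assume "\<not> PM h s (a k) < ?q"
      then have "h s ?q \<le> a k"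
        using ham_convex_btw[OF assms(1,2), of ?P "a k" "PM h s (a k)" ?q] hP assms(4)[of k]
          PM_main(1)[OF assms(1,2) gk] e by simp
      then show False using N[OF k] by simp
    qed
    show "norm (PM h s (a k) - ?P) < e" using lo up e by simp
  qed
qed

lemma PM_left:
  assumes "ham_ok h" "s \<in> {0..1}" "\<exists>p. h s p < b" "\<And>k. a k \<le> b" "\<And>k. \<exists>p. h s p \<le> a k"
    "a \<longlonglongrightarrow> b"
  shows "(\<lambda>k. PM h s (a k)) \<longlonglongrightarrow> PM h s b"
proof (rule LIMSEQ_I)
  fix e :: real assume e: "e > 0"
  obtain r where r: "h s r < b" "r > PM h s b - e" using PM_approach[OF assms(1-3) e] by blast
  have "\<forall>\<^sub>F k in sequentially. h s r < a k" using assms(6) r(1) by (rule order_tendstoD(1))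
  then obtain N where N: "\<And>k. k \<ge> N \<Longrightarrow> h s r < a k" unfolding eventually_sequentially by blast
  show "\<exists>N. \<forall>k\<ge>N. norm (PM h s (a k) - PM h s b) < e"
  proof (intro exI allI impI)
    fix k assume k: "k \<ge> N"
    have up: "PM h s (a k) \<le> PM h s b" by (rule PM_mono[OF assms(1,2) assms(5) assms(4)])
    have lo: "r \<le> PM h s (a k)" using N[OF k] by (intro PM_main(2)[OF assms(1,2) assms(5)]) simp
    show "norm (PM h s (a k) - PM h s b) < e" using up lo r by simp
  qed
qed



lemma PM_cont:
  assumes "ham_ok h" "\<forall>t\<in>{0..1}. \<exists>p. h t p < b"
  shows "continuous_on {0..1} (\<lambda>t. PM h t b)"
  unfolding continuous_on_iff
proof (intro ballI allI impI)
  fix t0 :: real and e :: real assume t0: "t0 \<in> {0..1}" and e: "e > 0"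
  let ?P = "PM h t0 b" let ?q = "?P + e/2"
  have g0: "\<exists>p. h t0 p \<le> b" using assms(2) t0 ex_lt_le[of "h t0" b] by blast
  obtain r where r: "h t0 r < b" "r > ?P - e" using PM_approach[OF assms(1) t0 _ e] assms(2) t0 by blast
  have rP: "r \<le> ?P" using PM_main(2)[OF assms(1) t0 g0] r(1) by simp
  have hq: "h t0 ?q > b"
  proof (rule ccontr)
    assume "\<not> h t0 ?q > b"
    then have "?q \<le> ?P" using PM_main(2)[OF assms(1) t0 g0, of ?q] by simp
    then show False using e by simp
  qed
  have cr: "continuous_on {0..1} (\<lambda>s. h s r)" and cq: "continuous_on {0..1} (\<lambda>s. h s ?q)"
    using ham_cont_s[OF assms(1)] by blast+
  have e1: "b - h t0 r > 0" using r(1) by simp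
  have e2: "h t0 ?q - b > 0" using hq by simp
  obtain d1 where d1: "d1 > 0" "\<forall>t\<in>{0..1}. dist t t0 < d1 \<longrightarrow> dist (h t r) (h t0 r) < b - h t0 r"
    using cr[unfolded continuous_on_iff, rule_format, OF t0 e1] by blast
  obtain d2 where d2: "d2 > 0" "\<forall>t\<in>{0..1}. dist t t0 < d2 \<longrightarrow> dist (h t ?q) (h t0 ?q) < h t0 ?q - b"
    using cq[unfolded continuous_on_iff, rule_format, OF t0 e2] by blast
  show "\<exists>d>0. \<forall>t\<in>{0..1}. dist t t0 < d \<longrightarrow> dist (PM h t b) ?P < e"
  proof (intro exI[of _ "min d1 d2"] conjI ballI impI)
    show "min d1 d2 > 0" using d1 d2 by simp
    fix t assume t: "t \<in> {0..1::real}" and dt: "dist t t0 < min d1 d2"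
    have "dist (h t r) (h t0 r) < b - h t0 r" using d1(2) t dt by simp
    then have htr: "h t r < b" unfolding dist_real_def by linarith
    have "dist (h t ?q) (h t0 ?q) < h t0 ?q - b" using d2(2) t dt by simp
    then have htq: "h t ?q > b" unfolding dist_real_def by linarith
    have gt: "\<exists>p. h t p \<le> b" using htr by (intro exI[of _ r]) simp
    have lo: "r \<le> PM h t b" using htr by (intro PM_main(2)[OF assms(1) t gt]) simp
    have up: "PM h t b < ?q"
    proof (rule ccontr)
      assume "\<not> PM h t b < ?q"
      moreover have "r \<le> ?q" using rP e by simp
      ultimately show False using ham_convex_btw[OF assms(1) t, of r b "PM h t b" ?q] htr PM_main(1)[OF assms(1) t gt] htq
        by linarith
    qed
    show "dist (PM h t b) ?P < e" unfolding dist_real_def using lo up r e rP by linarith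
  qed
qed



lemma PM_bound:
  assumes "ham_ok h"
  shows "\<exists>R. \<forall>t\<in>{0..1}. \<forall>b. b \<le> B \<longrightarrow> (\<exists>p. h t p \<le> b) \<longrightarrow> \<bar>PM h t b\<bar> \<le> R"
proof -
  obtain R where R: "\<forall>s\<in>{0..1}. \<forall>p. \<bar>p\<bar> \<ge> R \<longrightarrow> h s p \<ge> B + 1" using ham_coerc[OF assms] by blast
  show ?thesis
  proof (intro exI[of _ R] ballI allI impI)
    fix t b assume t: "t \<in> {0..1::real}" and b: "b \<le> B" and g: "\<exists>p. h t p \<le> b"
    have "h t (PM h t b) = b" by (rule PM_main(1)[OF assms t g])
    then have "\<not> \<bar>PM h t b\<bar> \<ge> R" using R t b by force
    then show "\<bar>PM h t b\<bar> \<le> R" by simp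
  qed
qed

lemma PM_integrable:
  assumes "ham_ok h" "\<forall>t\<in>{0..1}. \<exists>p. h t p \<le> b"
  shows "(\<lambda>t. PM h t b) integrable_on {0..1}"
proof -
  obtain R where R: "\<forall>t\<in>{0..1}. \<forall>b'. b' \<le> b + 1 \<longrightarrow> (\<exists>p. h t p \<le> b') \<longrightarrow> \<bar>PM h t b'\<bar> \<le> R"
    using PM_bound[OF assms(1)] by blast
  let ?a = "\<lambda>k::nat. b + 1 / (real k + 1)"
  have alim: "?a \<longlonglongrightarrow> b"
    using tendsto_add[OF tendsto_const LIMSEQ_inverse_real_of_nat] by (simp add: divide_inverse add.commute)
  have ageb: "\<And>k. ?a k \<ge> b" by simp
  have strict: "\<And>k. \<forall>t\<in>{0..1}. \<exists>p. h t p < ?a k"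
  proof (intro ballI)
    fix k t assume "t \<in> {0..1::real}"
    then obtain p where "h t p \<le> b" using assms(2) by blast
    moreover have "b < ?a k" by (simp add: add_pos_pos)
    ultimately show "\<exists>p. h t p < ?a k" by (intro exI[of _ p]) linarith
  qed
  show ?thesis
  proof (rule dominated_convergence(1))
    show "\<And>k. (\<lambda>t. PM h t (?a k)) integrable_on {0..1}"
      by (rule integrable_continuous_real[OF PM_cont[OF assms(1) strict]])
    show "(\<lambda>t. R) integrable_on {0..1::real}" by (rule integrable_const_ivl)
    show "norm (PM h t (?a k)) \<le> R" if "t \<in> {0..1}" for k t
    proof -
      have "?a k \<le> b + 1" by (simp add: divide_le_eq)
      moreover have "\<exists>p. h t p \<le> ?a k" using strict[of k] that ex_lt_le[of "h t" "?a k"] by blast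
      ultimately show ?thesis using R that by simp
    qed
    show "(\<lambda>k. PM h t (?a k)) \<longlonglongrightarrow> PM h t b" if "t \<in> {0..1}" for t
      using PM_right[OF assms(1) that _ ageb alim] assms(2) that by blast
  qed
qed

lemma sigma_conv:
  assumes "ham_ok h" "\<forall>t\<in>{0..1}. \<exists>p. h t p \<le> b" "\<And>k. \<forall>t\<in>{0..1}. \<exists>p. h t p \<le> a k"
    "\<And>k. a k \<le> B" "\<And>t. t \<in> {0..1} \<Longrightarrow> (\<lambda>k. PM h t (a k)) \<longlonglongrightarrow> PM h t b"
  shows "(\<lambda>k. integral {0..1} (\<lambda>t. PM h t (a k))) \<longlonglongrightarrow> integral {0..1} (\<lambda>t. PM h t b)"
proof -
  obtain R where R: "\<forall>t\<in>{0..1}. \<forall>b'. b' \<le> B \<longrightarrow> (\<exists>p. h t p \<le> b') \<longrightarrow> \<bar>PM h t b'\<bar> \<le> R"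
    using PM_bound[OF assms(1)] by blast
  show ?thesis
  proof (rule dominated_convergence(2))
    show "\<And>k. (\<lambda>t. PM h t (a k)) integrable_on {0..1}" by (rule PM_integrable[OF assms(1,3)])
    show "(\<lambda>t. R) integrable_on {0..1::real}" by (rule integrable_const_ivl)
    show "norm (PM h t (a k)) \<le> R" if "t \<in> {0..1}" for k t
      using R that assms(3,4)[of k] by simp
    show "(\<lambda>k. PM h t (a k)) \<longlonglongrightarrow> PM h t b" if "t \<in> {0..1}" for t using assms(5) that .
  qed
qed


lemma fermat_touch:
  fixes u \<phi> :: "real \<Rightarrow> real"
  assumes "s \<in> {0<..<1}" "(u has_real_derivative q) (at s)" "(\<phi> has_real_derivative d) (at s)"
    "\<delta> > 0" "\<forall>y\<in>{0<..<1}. \<bar>y - s\<bar> < \<delta> \<longrightarrow> u y - \<phi> y \<le> u s - \<phi> s"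
  shows "d = q"
proof -
  have der: "((\<lambda>y. u y - \<phi> y) has_real_derivative q - d) (at s)"
    by (rule DERIV_diff[OF assms(2,3)])
  let ?d = "min \<delta> (min s (1 - s))"
  have pos: "?d > 0" using assms(1,4) by auto
  have "\<forall>y. \<bar>s - y\<bar> < ?d \<longrightarrow> u y - \<phi> y \<le> u s - \<phi> s"
  proof (intro allI impI)
    fix y assume y: "\<bar>s - y\<bar> < ?d"
    then have "y \<in> {0<..<1}" "\<bar>y - s\<bar> < \<delta>" by (auto simp: abs_less_iff)
    then show "u y - \<phi> y \<le> u s - \<phi> s" using assms(5) by blast
  qed
  then have "q - d = 0" by (rule DERIV_local_max[OF der pos])
  then show ?thesis by simp
qed

lemma visc_const:
  assumes "\<forall>s\<in>{0..1}. h s 0 \<le> a"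
  shows "visc_subsol h a (\<lambda>_. 0)"
  unfolding visc_subsol_def
proof (intro ballI allI impI)
  fix s \<phi> \<phi>' assume s: "s \<in> {0<..<1::real}"
    and H: "(\<forall>x\<in>{0<..<1}. (\<phi> has_real_derivative \<phi>' x) (at x)) \<and> continuous_on {0<..<1} \<phi>' \<and>
       (\<exists>\<delta>>0. \<forall>y\<in>{0<..<1}. \<bar>y - s\<bar> < \<delta> \<longrightarrow> 0 - \<phi> y \<le> 0 - \<phi> s)"
  obtain \<delta> where d: "\<delta> > 0" "\<forall>y\<in>{0<..<1}. \<bar>y - s\<bar> < \<delta> \<longrightarrow> (\<lambda>_. 0) y - \<phi> y \<le> (\<lambda>_. 0) s - \<phi> s"
    using H by auto
  have "\<phi>' s = 0"
    by (rule fermat_touch[OF s _ _ d]) (use H s in auto)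
  then show "h s (\<phi>' s) \<le> a" using assms s by auto
qed

lemma visc_touch_point:
  assumes "visc_subsol h a u" "continuous_on {0..1} u" "t0 \<in> {0..1}" "e > 0"
  shows "\<exists>t\<in>{0<..<1}. \<bar>t - t0\<bar> < e \<and> (\<exists>p. h t p \<le> a)"
proof -
  define r where "r = min (e/2) (1/4)"
  have r: "r > 0" "r \<le> e/2" "r \<le> 1/4" using assms(4) by (auto simp: r_def)
  define s0 where "s0 = max r (min (1 - r) t0)"
  have s0: "r \<le> s0" "s0 \<le> 1 - r" "\<bar>s0 - t0\<bar> \<le> r" using r assms(3) by (auto simp: s0_def)
  have "compact (u ` {0..1})" by (intro compact_continuous_image assms(2) compact_Icc)
  then obtain B where B: "\<forall>x\<in>u ` {0..1}. \<bar>x\<bar> \<le> B" using compact_imp_bounded bounded_real by blast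
  have B': "\<And>y. y \<in> {0..1} \<Longrightarrow> \<bar>u y\<bar> \<le> B" using B by auto
  define M where "M = (2*B+1) / r^2"
  have Mr: "M * r^2 = 2*B+1" using r by (simp add: M_def)
  have Mpos: "M \<ge> 0" using B'[of 0] r by (simp add: M_def)
  define f where "f y = u y - M * (y - s0)^2" for y
  have cf: "continuous_on {0..1} f" unfolding f_def by (intro continuous_intros assms(2))
  obtain t where t: "t \<in> {0..1}" "\<forall>y\<in>{0..1}. f y \<le> f t"
    using continuous_attains_sup[OF _ _ cf] by auto
  have ts: "\<bar>t - s0\<bar> < r"
  proof (rule ccontr)
    assume "\<not> \<bar>t - s0\<bar> < r"
    then have "r^2 \<le> (t - s0)^2" using r by (simp add: abs_le_square_iff[symmetric]) 
    then have "M * r^2 \<le> M * (t - s0)^2" by (rule mult_left_mono[OF _ Mpos])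
    then have "f t \<le> B - (2*B+1)" using B'[OF t(1)] Mr unfolding f_def by linarith
    moreover have "s0 \<in> {0..1}" using s0 r by auto
    then have "f s0 \<le> f t" using t(2) by blast
    moreover have "f s0 = u s0" unfolding f_def by simp
    moreover have "\<bar>u s0\<bar> \<le> B" using B' \<open>s0 \<in> {0..1}\<close> by blast
    ultimately show False by linarith
  qed
  have tin: "t \<in> {0<..<1}" using ts s0 by (auto simp: abs_less_iff)
  have "h t ((\<lambda>y. 2 * M * (y - s0)) t) \<le> a"
  proof (rule assms(1)[unfolded visc_subsol_def, rule_format, OF tin])
    show "(\<forall>x\<in>{0<..<1}. ((\<lambda>y. M * (y - s0)^2) has_real_derivative 2 * M * (x - s0)) (at x)) \<and>
      continuous_on {0<..<1} (\<lambda>y. 2 * M * (y - s0)) \<and>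
      (\<exists>\<delta>>0. \<forall>y\<in>{0<..<1}. \<bar>y - t\<bar> < \<delta> \<longrightarrow> u y - M * (y - s0)^2 \<le> u t - M * (t - s0)^2)"
    proof (intro conjI exI[of _ 1])
      show "\<forall>x\<in>{0<..<1}. ((\<lambda>y. M * (y - s0)^2) has_real_derivative 2 * M * (x - s0)) (at x)"
        by (auto intro!: derivative_eq_intros)
    next
      fix x :: real
      have "((\<lambda>y. M * (y - s0)^2) has_real_derivative 2 * M * (x - s0)) (at x)"
        by (auto intro!: derivative_eq_intros)
    next
      show "continuous_on {0<..<1} (\<lambda>y. 2 * M * (y - s0))" by (intro continuous_intros)
    next
      show "(1::real) > 0" by simp
    next
      show "\<forall>y\<in>{0<..<1}. \<bar>y - t\<bar> < 1 \<longrightarrow> u y - M * (y - s0)^2 \<le> u t - M * (t - s0)^2"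
        using t(2) unfolding f_def by auto
    qed
  qed
  moreover have "\<bar>t - t0\<bar> < e" using ts s0 r by linarith
  ultimately show ?thesis using tin by blast
qed

lemma visc_good:
  assumes "ham_ok h" "visc_subsol h a u" "continuous_on {0..1} u"
  shows "\<forall>t\<in>{0..1}. \<exists>p. h t p \<le> a"
proof
  fix t0 :: real assume t0: "t0 \<in> {0..1}"
  obtain R where R: "\<forall>s\<in>{0..1}. \<forall>p. \<bar>p\<bar> \<ge> R \<longrightarrow> h s p \<ge> a + 1" using ham_coerc[OF assms(1)] by blast
  have c: "continuous_on ({0..1} \<times> UNIV) (\<lambda>(s,p). h s p)" using assms(1) unfolding ham_ok_def by blast
  let ?Z = "({0..1} \<times> {-\<bar>R\<bar>..\<bar>R\<bar>}) \<inter> (({0..1} \<times> UNIV) \<inter> (\<lambda>(s,p). h s p) -` {..a})"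
  have "closed (({0..1::real} \<times> (UNIV::real set)) \<inter> (\<lambda>(s,p). h s p) -` {..a})"
    by (rule continuous_closed_preimage[OF c]) (auto intro: closed_Times)
  moreover have "compact ({0..1::real} \<times> {-\<bar>R\<bar>..\<bar>R\<bar>::real})" by (intro compact_Times) auto
  ultimately have "compact ?Z" by (rule compact_Int_closed[rotated])
  then have "compact (fst ` ?Z)" by (rule compact_continuous_image[rotated]) (intro continuous_intros)
  then have cl: "closed (fst ` ?Z)" by (rule compact_imp_closed)
  have "t0 \<in> fst ` ?Z"
  proof (rule closed_approachable[OF cl, THEN iffD1], intro allI impI)
    fix e :: real assume e: "e > 0"
    obtain t p where t: "t \<in> {0<..<1}" "\<bar>t - t0\<bar> < e" "h t p \<le> a"
      using visc_touch_point[OF assms(2,3) t0 e] by blast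
    have "t \<in> {0..1}" using t by auto
    then have "\<not> \<bar>p\<bar> \<ge> R" using R[rule_format, of t p] t(3) by linarith
    then have "(t, p) \<in> ?Z" using t by auto
    then show "\<exists>y\<in>fst ` ?Z. dist y t0 < e" using t(2) by (force simp: dist_real_def)
  qed
  then show "\<exists>p. h t0 p \<le> a" by auto
qed

definition cset :: "(real \<Rightarrow> real \<Rightarrow> real) \<Rightarrow> real set" where
  "cset h = {a. \<exists>u. continuous_on {0..1} u \<and> u 0 = u 1 \<and> visc_subsol h a u}"

lemma cset_facts:
  assumes "ham_ok h"
  shows "cset h \<noteq> {}" "bdd_below (cset h)" "\<forall>t\<in>{0..1}. \<exists>p. h t p \<le> c_arc h"
proof -
  obtain B where B: "\<forall>s\<in>{0..1}. \<forall>p. \<bar>p\<bar> \<le> 0 \<longrightarrow> \<bar>h s p\<bar> \<le> B" using ham_bdd_box[OF assms] by blast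
  have "\<forall>s\<in>{0..1}. h s 0 \<le> B" using B by force
  then have "B \<in> cset h" unfolding cset_def using visc_const[of h B] by force
  then show ne: "cset h \<noteq> {}" by blast
  obtain L where L: "\<forall>s\<in>{0..1}. \<forall>p. L \<le> h s p" using ham_lower[OF assms] by blast
  have gd: "\<forall>t\<in>{0..1}. \<exists>p. h t p \<le> a" if "a \<in> cset h" for a
    using that visc_good[OF assms] unfolding cset_def by blast
  have "L \<le> a" if aa: "a \<in> cset h" for a
  proof -
    obtain p where "h 0 p \<le> a" using gd[OF aa] by force
    then show ?thesis using L[rule_format, of 0 p] by simp
  qed
  then show bb: "bdd_below (cset h)" unfolding bdd_below_def by blast
  show "\<forall>t\<in>{0..1}. \<exists>p. h t p \<le> c_arc h"
  proof
    fix t :: real assume t: "t \<in> {0..1}"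
    have "(INF p. h t p) \<le> c_arc h" unfolding c_arc_def cset_def[symmetric]
    proof (rule cInf_greatest[OF ne])
      fix a assume "a \<in> cset h"
      then obtain p where "h t p \<le> a" using gd t by blast
      then show "(INF p. h t p) \<le> a" using ham_inf_le[OF assms t, of p] by linarith
    qed
    then show "\<exists>p. h t p \<le> c_arc h" using ham_good_iff[OF assms t] by blast
  qed
qed

lemma integral_flip01:
  fixes f :: "real \<Rightarrow> real"
  assumes "f integrable_on {0..1}"
  shows "integral {0..1} (\<lambda>t. f (1 - t)) = integral {0..1} f"
proof -
  have "(f has_integral integral {0..1} f) (cbox 0 1)" using assms by (simp add: has_integral_integral)
  from has_integral_affinity[OF this, of "-1" 1]
  have "((\<lambda>x. f (1 - x)) has_integral integral {0..1} f) ((\<lambda>x. - x + 1) ` cbox 0 1)" by simp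
  moreover have "(\<lambda>x::real. - x + 1) ` cbox 0 1 = {0..1}"
  proof -
    have "x \<in> (\<lambda>x::real. - x + 1) ` {0..1}" if "x \<in> {0..1}" for x
      using that by (intro image_eqI[of _ _ "1 - x"]) auto
    then show ?thesis by auto
  qed
  ultimately show ?thesis by (simp add: integral_unique)
qed

lemma build_subsol:
  assumes "ham_ok h" "continuous_on {0..1} q" "\<forall>t\<in>{0..1}. h t (q t) \<le> b"
    "integral {0..1} q = 0"
  shows "c_arc h \<le> b"
proof -
  define u where "u x = integral {0..x} q" for x
  have iq: "q integrable_on {0..1}" by (rule integrable_continuous_real[OF assms(2)])
  have cu: "continuous_on {0..1} u" unfolding u_def by (rule indefinite_integral_continuous_1[OF iq])
  have u01: "u 0 = u 1" unfolding u_def using assms(4) by simp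
  have vs: "visc_subsol h b u"
    unfolding visc_subsol_def
  proof (intro ballI allI impI)
    fix s \<phi> \<phi>' assume s: "s \<in> {0<..<1::real}"
      and H: "(\<forall>x\<in>{0<..<1}. (\<phi> has_real_derivative \<phi>' x) (at x)) \<and> continuous_on {0<..<1} \<phi>' \<and>
         (\<exists>\<delta>>0. \<forall>y\<in>{0<..<1}. \<bar>y - s\<bar> < \<delta> \<longrightarrow> u y - \<phi> y \<le> u s - \<phi> s)"
    obtain \<delta> where d: "\<delta> > 0" "\<forall>y\<in>{0<..<1}. \<bar>y - s\<bar> < \<delta> \<longrightarrow> u y - \<phi> y \<le> u s - \<phi> s"
      using H by auto
    have s1: "s \<in> {0..1}" using s by auto
    have "(u has_real_derivative q s) (at s within {0..1})"
      unfolding u_def by (rule integral_has_real_derivative[OF assms(2) s1])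
    moreover have "at s within {0..1} = at s" using s by (intro at_within_interior) simp
    ultimately have du: "(u has_real_derivative q s) (at s)" by simp
    have "\<phi>' s = q s" by (rule fermat_touch[OF s du _ d]) (use H s in auto)
    then show "h s (\<phi>' s) \<le> b" using assms(3) s1 by simp
  qed
  have "b \<in> cset h" unfolding cset_def using cu u01 vs by blast
  then show ?thesis unfolding c_arc_def cset_def[symmetric] by (rule cInf_lower[OF _ cset_facts(2)[OF assms(1)]])
qed


fun wk :: "'e set \<Rightarrow> ('e \<Rightarrow> 'v) \<Rightarrow> ('e \<Rightarrow> 'v) \<Rightarrow> 'v \<Rightarrow> 'e list \<Rightarrow> 'v \<Rightarrow> bool" where
  "wk E src tgt x [] y = (x = y)"
| "wk E src tgt x (e # es) y = (e \<in> E \<and> src e = x \<and> wk E src tgt (tgt e) es y)"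

definition W :: "('e \<Rightarrow> real) \<Rightarrow> 'e list \<Rightarrow> real" where
  "W w p = sum_list (map w p)"

lemma W_simps[simp]: "W w [] = 0" "W w (e # p) = w e + W w p" "W w (p @ q) = W w p + W w q"
  by (auto simp: W_def)

lemma wk_append: "wk E src tgt x (p @ q) z \<longleftrightarrow> (\<exists>y. wk E src tgt x p y \<and> wk E src tgt y q z)"
  by (induction p arbitrary: x) auto

lemma wk_set: "wk E src tgt x p y \<Longrightarrow> set p \<subseteq> E"
  by (induction p arbitrary: x) auto

lemma wk_src: "wk E src tgt x p y \<Longrightarrow> i < length p \<Longrightarrow> src (p ! i) \<in> src ` E"
  using wk_set[of E src tgt x p y] by (metis image_eqI nth_mem subsetD)

lemma tele:
  assumes "\<forall>e\<in>E. u (src e) - u (tgt e) \<le> w e" "wk E src tgt x p y"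
  shows "u x - u y \<le> W w p"
  using assms(2)
proof (induction p arbitrary: x)
  case Nil then show ?case by simp
next
  case (Cons e p)
  then have "u (tgt e) - u y \<le> W w p" "e \<in> E" "src e = x" by auto
  then show ?case using assms(1) by force
qed

lemma reach:
  assumes "(x, y) \<in> {(src e, tgt e) | e. e \<in> E}\<^sup>*"
  shows "\<exists>p. wk E src tgt x p y"
  using assms
proof (induction rule: rtrancl_induct)
  case base then show ?case by (intro exI[of _ "[]"]) simp
next
  case (step y z)
  then obtain p e where "wk E src tgt x p y" "e \<in> E" "y = src e" "z = tgt e" by auto
  then have "wk E src tgt x (p @ [e]) z" by (auto simp: wk_append)
  then show ?case by blast
qed

lemma short_cycles:
  assumes "finite V" "src ` E \<subseteq> V"
    "\<And>p x. wk E src tgt x p x \<Longrightarrow> length p \<le> card V \<Longrightarrow> 0 \<le> W w p"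
    "wk E src tgt x p x"
  shows "0 \<le> W w p"
  using assms(4)
proof (induction "length p" arbitrary: p x rule: less_induct)
  case less
  show ?case
  proof (cases "length p \<le> card V")
    case True then show ?thesis using assms(3) less.prems by blast
  next
    case False
    have "set (map src p) \<subseteq> V" using wk_set[OF less.prems] assms(2) by auto
    then have "card (set (map src p)) \<le> card V" by (rule card_mono[OF assms(1)])
    then have "\<not> distinct (map src p)" using False distinct_card[of "map src p"] by auto
    then obtain i j where ij: "i < length p" "j < length p" "i \<noteq> j" "src (p ! i) = src (p ! j)"
      unfolding distinct_conv_nth by auto
    obtain i j where ij: "i < j" "j < length p" "src (p ! i) = src (p ! j)"
    proof (cases "i < j")
      case True then show ?thesis using that ij by blast
    next
      case False then show ?thesis using that[of j i] ij by auto
    qed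
    define p1 where "p1 = take i p"
    define c where "c = take (j - i) (drop i p)"
    define p3 where "p3 = drop j p"
    have dj: "drop (j - i) (drop i p) = p3" unfolding p3_def using ij by simp
    have decomp: "p = p1 @ c @ p3" unfolding p1_def c_def using dj by (metis append_take_drop_id)
    from less.prems obtain y1 y2 where w1: "wk E src tgt x p1 y1" and w2: "wk E src tgt y1 c y2"
      and w3: "wk E src tgt y2 p3 x"
      unfolding decomp wk_append by blast
    have "drop i p = p ! i # drop (Suc i) p" using ij by (simp add: Cons_nth_drop_Suc)
    have y1: "y1 = src (p ! i)"
    proof -
      have "wk E src tgt y1 (drop i p) x" using w2 w3 dj unfolding c_def
        by (metis append_take_drop_id wk_append)
      then show ?thesis using \<open>drop i p = p ! i # drop (Suc i) p\<close> by simp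
    qed
    have y2: "y2 = src (p ! j)"
    proof -
      have "p3 = p ! j # drop (Suc j) p" unfolding p3_def using ij by (simp add: Cons_nth_drop_Suc)
      then show ?thesis using w3 by simp
    qed
    have lc: "length c < length p" unfolding c_def using ij by simp
    have l13: "length (p1 @ p3) < length p" unfolding p1_def p3_def using ij by simp
    have "wk E src tgt y1 c y1" using w2 y1 y2 ij by simp
    then have "0 \<le> W w c" using less.hyps[OF lc] by blast
    moreover have "wk E src tgt x (p1 @ p3) x" using w1 w3 y1 y2 ij by (auto simp: wk_append)
    then have "0 \<le> W w (p1 @ p3)" using less.hyps[OF l13] by blast
    ultimately show ?thesis by (subst decomp) simp
  qed
qed

lemma vert_out:
  assumes "\<forall>e\<in>E. rv e \<in> E \<and> src (rv e) = tgt e" "x \<in> vertices E src tgt"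
  shows "out_edges E src x \<noteq> {}"
proof -
  from assms(2) consider e where "e \<in> E" "x = src e" | e where "e \<in> E" "x = tgt e"
    unfolding vertices_def by blast
  then show ?thesis
  proof cases
    case 1 then show ?thesis unfolding out_edges_def by blast
  next
    case 2 then have "rv e \<in> out_edges E src x" using assms(1) unfolding out_edges_def by auto
    then show ?thesis by blast
  qed
qed

lemma D_ex:
  assumes rv: "\<forall>e\<in>E. rv e \<in> E \<and> src (rv e) = tgt e \<and> tgt (rv e) = src e"
    and conn: "\<forall>x\<in>vertices E src tgt. \<forall>y\<in>vertices E src tgt. \<exists>p. wk E src tgt x p y"
    and x0: "x0 \<in> vertices E src tgt"
    and cyc: "\<And>p x. wk E src tgt x p x \<Longrightarrow> 0 \<le> W w p"
  shows "\<exists>u. \<forall>e\<in>E. u (tgt e) - u (src e) \<le> w (rv e)"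
proof -
  define S where "S x = {W w p | p. wk E src tgt x p x0}" for x
  define u where "u x = Inf (S x)" for x
  have ne: "S x \<noteq> {}" if xv: "x \<in> vertices E src tgt" for x
  proof -
    obtain p where "wk E src tgt x p x0" using conn xv x0 by blast
    then have "W w p \<in> S x" unfolding S_def by blast
    then show ?thesis by blast
  qed
  have bb: "bdd_below (S x)" if xv: "x \<in> vertices E src tgt" for x
  proof -
    obtain q where q: "wk E src tgt x0 q x" using conn xv x0 by blast
    have "- W w q \<le> r" if "r \<in> S x" for r
    proof -
      obtain p where p: "r = W w p" "wk E src tgt x p x0" using \<open>r \<in> S x\<close> unfolding S_def by blast
      have "wk E src tgt x (p @ q) x" using p q by (auto simp: wk_append)
      then have "0 \<le> W w (p @ q)" by (rule cyc)
      then show ?thesis using p by simp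
    qed
    then show ?thesis unfolding bdd_below_def by blast
  qed
  show ?thesis
  proof (intro exI[of _ u] ballI)
    fix e assume e: "e \<in> E"
    have vs: "src e \<in> vertices E src tgt" and vt: "tgt e \<in> vertices E src tgt"
      using e unfolding vertices_def by auto
    have "u (tgt e) - w (rv e) \<le> u (src e)" unfolding u_def
    proof (rule cInf_greatest[OF ne[OF vs]])
      fix r assume "r \<in> S (src e)"
      then obtain p where p: "r = W w p" "wk E src tgt (src e) p x0" unfolding S_def by blast
      have "wk E src tgt (tgt e) (rv e # p) x0" using p rv e by auto
      then have "W w (rv e # p) \<in> S (tgt e)" unfolding S_def by blast
      then have "w (rv e) + W w p \<in> S (tgt e)" by simp
      then have "Inf (S (tgt e)) \<le> w (rv e) + W w p" by (rule cInf_lower[OF _ bb[OF vt]])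
      then show "Inf (S (tgt e)) - w (rv e) \<le> r" using p by simp
    qed
    then show "u (tgt e) - u (src e) \<le> w (rv e)" by simp
  qed
qed

lemma D_sol:
  assumes fin: "finite E"
    and rv: "\<forall>e\<in>E. rv e \<in> E \<and> src (rv e) = tgt e \<and> tgt (rv e) = src e"
    and conn: "\<forall>x\<in>vertices E src tgt. \<forall>y\<in>vertices E src tgt. \<exists>p. wk E src tgt x p y"
    and cyc: "\<And>p x. wk E src tgt x p x \<Longrightarrow> 0 \<le> W w p"
    and C: "wk E src tgt z C z" "C \<noteq> []" "W w C = 0"
  shows "\<exists>u. \<forall>x\<in>vertices E src tgt. u x = Min ((\<lambda>e. u (tgt e) + w e) ` out_edges E src x)"
proof -
  obtain e0 C' where C0: "C = e0 # C'" using C(2) by (cases C) auto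
  have z: "z \<in> vertices E src tgt" using C C0 unfolding vertices_def by auto
  define S where "S x = {W w p | p. wk E src tgt x p z}" for x
  define u where "u x = Inf (S x)" for x
  have ne: "S x \<noteq> {}" if xv: "x \<in> vertices E src tgt" for x
  proof -
    obtain p where "wk E src tgt x p z" using conn xv z by blast
    then have "W w p \<in> S x" unfolding S_def by blast
    then show ?thesis by blast
  qed
  have bb: "bdd_below (S x)" if xv: "x \<in> vertices E src tgt" for x
  proof -
    obtain q where q: "wk E src tgt z q x" using conn xv z by blast
    have "- W w q \<le> r" if "r \<in> S x" for r
    proof -
      obtain p where p: "r = W w p" "wk E src tgt x p z" using \<open>r \<in> S x\<close> unfolding S_def by blast
      have "wk E src tgt x (p @ q) x" using p q by (auto simp: wk_append)
      then have "0 \<le> W w (p @ q)" by (rule cyc)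
      then show ?thesis using p by simp
    qed
    then show ?thesis unfolding bdd_below_def by blast
  qed
  have vt: "tgt e \<in> vertices E src tgt" if "e \<in> E" for e using that unfolding vertices_def by auto
  have step: "u x \<le> u (tgt e) + w e" if "e \<in> out_edges E src x" "x \<in> vertices E src tgt" for e x
  proof -
    have e: "e \<in> E" "src e = x" using that unfolding out_edges_def by auto
    have "u x - w e \<le> u (tgt e)" unfolding u_def
    proof (rule cInf_greatest[OF ne[OF vt[OF e(1)]]])
      fix r assume "r \<in> S (tgt e)"
      then obtain p where p: "r = W w p" "wk E src tgt (tgt e) p z" unfolding S_def by blast
      have "wk E src tgt x (e # p) z" using p e by auto
      then have "W w (e # p) \<in> S x" unfolding S_def by blast
      then have "w e + W w p \<in> S x" by simp
      then have "Inf (S x) \<le> w e + W w p" by (rule cInf_lower[OF _ bb[OF that(2)]])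
      then show "Inf (S x) - w e \<le> r" using p by simp
    qed
    then show ?thesis by simp
  qed
  show ?thesis
  proof (intro exI[of _ u] ballI)
    fix x assume x: "x \<in> vertices E src tgt"
    let ?F = "(\<lambda>e. u (tgt e) + w e) ` out_edges E src x"
    have fF: "finite ?F" using fin unfolding out_edges_def by auto
    have neF: "?F \<noteq> {}" using vert_out[of E rv src tgt x] rv x by auto
    have le1: "u x \<le> Min ?F" using step x by (auto intro!: Min.boundedI[OF fF neF])
    have le2: "Min ?F \<le> u x"
    proof (cases "x = z")
      case True
      have e0: "e0 \<in> out_edges E src x" using C C0 True unfolding out_edges_def by auto
      have "wk E src tgt (tgt e0) C' z" using C C0 by auto
      then have "W w C' \<in> S (tgt e0)" unfolding S_def by blast
      then have "u (tgt e0) \<le> W w C'" unfolding u_def by (rule cInf_lower[OF _ bb[OF vt]]) (use C C0 in auto)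
      then have "Min ?F \<le> W w C" using Min_le[OF fF, of "u (tgt e0) + w e0"] e0 C0 by force
      moreover have "0 \<le> u x" unfolding u_def
      proof (rule cInf_greatest[OF ne[OF x]])
        fix r assume "r \<in> S x"
        then show "0 \<le> r" using True cyc unfolding S_def by blast
      qed
      ultimately show ?thesis using C(3) by simp
    next
      case False
      have ux: "u x = Inf (S x)" by (simp add: u_def)
      show ?thesis unfolding ux
      proof (rule cInf_greatest[OF ne[OF x]])
        fix r assume "r \<in> S x"
        then obtain p where p: "r = W w p" "wk E src tgt x p z" unfolding S_def by blast
        then obtain e p' where pp: "p = e # p'" using False by (cases p) auto
        have e: "e \<in> out_edges E src x" "wk E src tgt (tgt e) p' z" using p pp unfolding out_edges_def by auto
        have "u (tgt e) \<le> W w p'" unfolding u_def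
          by (rule cInf_lower[OF _ bb[OF vt]]) (use e in \<open>auto simp: S_def out_edges_def\<close>)
        moreover have "Min ?F \<le> u (tgt e) + w e" using Min_le[OF fF] e(1) by blast
        ultimately show "Min ?F \<le> r" using p pp by simp
      qed
    qed
    show "u x = Min ?F" using le1 le2 by simp
  qed
qed


lemma arc_good:
  assumes "ham_ok h" "a_arc h \<le> b"
  shows "\<forall>t\<in>{0..1}. \<exists>p. h t p \<le> b"
proof
  fix t :: real assume t: "t \<in> {0..1}"
  obtain B where B: "\<forall>s\<in>{0..1}. \<forall>p. \<bar>p\<bar> \<le> 0 \<longrightarrow> \<bar>h s p\<bar> \<le> B" using ham_bdd_box[OF assms(1)] by blast
  have "bdd_above ((\<lambda>s. INF p. h s p) ` {0..1})"
  proof (rule bdd_aboveI2)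
    fix s :: real assume s: "s \<in> {0..1}"
    have "(INF p. h s p) \<le> h s 0" by (rule ham_inf_le[OF assms(1) s])
    also have "\<dots> \<le> B" using B s by force
    finally show "(INF p. h s p) \<le> B" .
  qed
  then have "(INF p. h t p) \<le> a_arc h" unfolding a_arc_def by (rule cSUP_upper[OF t])
  then have "(INF p. h t p) \<le> b" using assms(2) by linarith
  then show "\<exists>p. h t p \<le> b" using ham_good_iff[OF assms(1) t] by blast
qed

lemma arc_strict:
  assumes "ham_ok h" "a_arc h < b"
  shows "\<forall>t\<in>{0..1}. \<exists>p. h t p < b"
proof
  fix t :: real assume t: "t \<in> {0..1}"
  have "a_arc h \<le> (a_arc h + b) / 2" using assms(2) by simp
  then obtain p where "h t p \<le> (a_arc h + b) / 2" using arc_good[OF assms(1)] t by blast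
  moreover have "(a_arc h + b) / 2 < b" using assms(2) by simp
  ultimately show "\<exists>p. h t p < b" by (intro exI[of _ p]) simp
qed

lemma good_arc:
  assumes "ham_ok h" "\<forall>t\<in>{0..1}. \<exists>p. h t p \<le> b"
  shows "a_arc h \<le> b"
  unfolding a_arc_def
proof (rule cSUP_least)
  show "{0..1::real} \<noteq> {}" by simp
  fix t :: real assume t: "t \<in> {0..1}"
  then show "(INF p. h t p) \<le> b" using ham_good_iff[OF assms(1) t] assms(2) by blast
qed

lemma good_flip:
  fixes h h2 :: "real \<Rightarrow> real \<Rightarrow> real"
  assumes "\<forall>s p. h2 s p = h (1 - s) (- p)" "\<forall>t\<in>{0..1}. \<exists>p. h t p \<le> b"
  shows "\<forall>t\<in>{0..1}. \<exists>p. h2 t p \<le> b"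
proof
  fix t :: real assume "t \<in> {0..1}"
  then have "1 - t \<in> {0..1}" by auto
  then obtain p where "h (1 - t) p \<le> b" using assms(2) by blast
  then have "h2 t (- p) \<le> b" using assms(1) by simp
  then show "\<exists>p. h2 t p \<le> b" by blast
qed

lemma strict_flip:
  fixes h h2 :: "real \<Rightarrow> real \<Rightarrow> real"
  assumes "\<forall>s p. h2 s p = h (1 - s) (- p)" "\<forall>t\<in>{0..1}. \<exists>p. h t p < b"
  shows "\<forall>t\<in>{0..1}. \<exists>p. h2 t p < b"
proof
  fix t :: real assume "t \<in> {0..1}"
  then have "1 - t \<in> {0..1}" by auto
  then obtain p where "h (1 - t) p < b" using assms(2) by blast
  then have "h2 t (- p) < b" using assms(1) by simp
  then show "\<exists>p. h2 t p < b" by blast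
qed

lemma tendsto_W:
  assumes "\<forall>e\<in>set p. (\<lambda>k. f k e) \<longlonglongrightarrow> g e"
  shows "(\<lambda>k. W (f k) p) \<longlonglongrightarrow> W g p"
  using assms
proof (induction p)
  case Nil then show ?case by simp
next
  case (Cons e p)
  then have "(\<lambda>k. f k e + W (f k) p) \<longlonglongrightarrow> g e + W g p" by (intro tendsto_add) auto
  then show ?case by simp
qed

lemma loop_lemma:
  assumes h: "ham_ok h" and h2: "ham_ok h2" and fl: "\<forall>s p. h2 s p = h (1 - s) (- p)"
    and st: "\<forall>t\<in>{0..1}. \<exists>p. h t p < b"
    and I1: "integral {0..1} (\<lambda>t. PM h t b) > 0" and I2: "integral {0..1} (\<lambda>t. PM h2 t b) > 0"
  shows "c_arc h \<le> b"
proof -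
  have st2: "\<forall>t\<in>{0..1}. \<exists>p. h2 t p < b" by (rule strict_flip[OF fl st])
  define i1 where "i1 = integral {0..1} (\<lambda>t. PM h t b)"
  define i2 where "i2 = integral {0..1} (\<lambda>t. PM h2 t b)"
  define l where "l = i2 / (i1 + i2)"
  have i1p: "i1 > 0" and i2p: "i2 > 0" using I1 I2 by (auto simp: i1_def i2_def)
  have l01: "0 \<le> l" "l \<le> 1" using i1p i2p by (auto simp: l_def field_simps)
  define q where "q t = l * PM h t b + (1 - l) * (- PM h2 (1 - t) b)" for t
  have c1: "continuous_on {0..1} (\<lambda>t. PM h t b)" by (rule PM_cont[OF h st])
  have c2: "continuous_on {0..1} (\<lambda>t. PM h2 (1 - t) b)"
    by (rule continuous_on_compose2[OF PM_cont[OF h2 st2]]) (auto intro!: continuous_intros)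
  have cq: "continuous_on {0..1} q" unfolding q_def by (intro continuous_intros c1 c2)
  have hq: "h t (q t) \<le> b" if t: "t \<in> {0..1}" for t
  proof -
    have t': "1 - t \<in> {0..1}" using t by auto
    have g1: "\<exists>p. h t p \<le> b" using st t ex_lt_le[of "h t" b] by blast
    have g2: "\<exists>p. h2 (1 - t) p \<le> b" using st2 t' ex_lt_le[of "h2 (1 - t)" b] by blast
    let ?x1 = "PM h t b" let ?x2 = "- PM h2 (1 - t) b"
    have hx1: "h t ?x1 = b" by (rule PM_main(1)[OF h t g1])
    have "h2 (1 - t) (PM h2 (1 - t) b) = b" by (rule PM_main(1)[OF h2 t' g2])
    then have hx2: "h t ?x2 = b" using fl by simp
    have x21: "?x2 \<le> ?x1" using PM_main(2)[OF h t g1, of ?x2] hx2 by simp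
    have e1: "q t - ?x2 = l * (?x1 - ?x2)" unfolding q_def by (simp add: algebra_simps)
    have e2: "?x1 - q t = (1 - l) * (?x1 - ?x2)" unfolding q_def by (simp add: algebra_simps)
    have "0 \<le> l * (?x1 - ?x2)" using l01 x21 by simp
    then have "?x2 \<le> q t" using e1 by linarith
    moreover have "0 \<le> (1 - l) * (?x1 - ?x2)" using l01 x21 by simp
    then have "q t \<le> ?x1" using e2 by linarith
    ultimately show ?thesis using ham_convex_btw[OF h t, of ?x2 b ?x1 "q t"] hx1 hx2 by simp
  qed
  have int1: "(\<lambda>t. PM h t b) integrable_on {0..1}" by (rule integrable_continuous_real[OF c1])
  have int2: "(\<lambda>t. PM h2 (1 - t) b) integrable_on {0..1}" by (rule integrable_continuous_real[OF c2])
  have int2': "(\<lambda>t. PM h2 t b) integrable_on {0..1}"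
    by (rule integrable_continuous_real[OF PM_cont[OF h2 st2]])
  have flip: "integral {0..1} (\<lambda>t. PM h2 (1 - t) b) = i2"
    unfolding i2_def by (rule integral_flip01[OF int2'])
  have "integral {0..1} q = integral {0..1} (\<lambda>t. l * PM h t b) + integral {0..1} (\<lambda>t. (1 - l) * (- PM h2 (1 - t) b))"
    unfolding q_def by (rule integral_add; rule integrable_continuous_real; intro continuous_intros c1 c2)
  also have "\<dots> = l * i1 - (1 - l) * i2" using flip by (simp add: i1_def)
  also have "\<dots> = 0" using i1p i2p by (simp add: l_def field_simps)
  finally have iq: "integral {0..1} q = 0" .
  show ?thesis by (rule build_subsol[OF h cq _ iq]) (use hq in blast)
qed

lemma flat_reflect:
  assumes h: "ham_ok h" and h2: "ham_ok h2" and fl: "\<forall>s p. h2 s p = h (1 - s) (- p)"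
    and flat: "\<forall>t\<in>{0..1}. \<forall>p. b \<le> h t p" and g: "\<forall>t\<in>{0..1}. \<exists>p. h t p \<le> b"
  shows "integral {0..1} (\<lambda>t. PM h2 t b) = - integral {0..1} (\<lambda>t. PM h t b)"
proof -
  have g2: "\<forall>t\<in>{0..1}. \<exists>p. h2 t p \<le> b" by (rule good_flip[OF fl g])
  have pt: "PM h2 t b = - PM h (1 - t) b" if t: "t \<in> {0..1}" for t
  proof (rule ccontr)
    assume ne: "PM h2 t b \<noteq> - PM h (1 - t) b"
    have t': "1 - t \<in> {0..1}" using t by auto
    let ?x = "PM h (1 - t) b" let ?y = "- PM h2 t b"
    have hx: "h (1 - t) ?x = b" by (rule PM_main(1)[OF h t']) (use g t' in blast)
    have "h2 t (PM h2 t b) = b" by (rule PM_main(1)[OF h2 t]) (use g2 t in blast)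
    then have hy: "h (1 - t) ?y = b" using fl by simp
    define lo where "lo = min ?x ?y" define hi where "hi = max ?x ?y"
    have lohi: "lo < hi" using ne unfolding lo_def hi_def by auto
    have sub: "{lo<..<hi} \<subseteq> {p. h (1 - t) p \<le> b}"
    proof
      fix z assume z: "z \<in> {lo<..<hi}"
      have "h (1 - t) lo \<le> b" "h (1 - t) hi \<le> b" using hx hy unfolding lo_def hi_def by (auto simp: min_def max_def)
      then show "z \<in> {p. h (1 - t) p \<le> b}" using ham_convex_btw[OF h t', of lo b hi z] z by auto
    qed
    then have "{lo<..<hi} \<subseteq> interior {p. h (1 - t) p \<le> b}" by (intro interior_maximal) auto
    also have "\<dots> = {p. h (1 - t) p < b}" using h t' unfolding ham_ok_def by blast
    also have "\<dots> = {}" using flat t' by (auto simp: not_less)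
    finally have "{lo<..<hi} \<subseteq> {}" .
    moreover have "(lo + hi) / 2 \<in> {lo<..<hi}" using lohi by auto
    ultimately show False by blast
  qed
  have int: "(\<lambda>t. PM h t b) integrable_on {0..1}" by (rule PM_integrable[OF h g])
  have "integral {0..1} (\<lambda>t. PM h2 t b) = integral {0..1} (\<lambda>t. - PM h (1 - t) b)"
    by (rule integral_cong) (use pt in auto)
  also have "\<dots> = - integral {0..1} (\<lambda>t. PM h t b)" using integral_flip01[OF int] by simp
  finally show ?thesis .
qed


lemma lim_div_suc: "(\<lambda>k::nat. d / (real k + 1)) \<longlonglongrightarrow> 0"
  using tendsto_mult[OF tendsto_const[of d] LIMSEQ_inverse_real_of_nat] by (simp add: divide_inverse add.commute)

theorem theorem6p18:
  fixes E :: "'e set" and src tgt :: "'e \<Rightarrow> 'v" and rv :: "'e \<Rightarrow> 'e"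
    and H :: "'e \<Rightarrow> real \<Rightarrow> real \<Rightarrow> real"
  assumes "network_ok E src tgt rv H"
    and "\<forall>e\<in>E. a_arc (H e) = a_zero E src tgt H \<longrightarrow>
           (\<exists>m. \<forall>s\<in>{0..1}. (INF p. H e s p) = m)"
  shows "\<exists>u :: 'v \<Rightarrow> real. \<forall>x\<in>vertices E src tgt.
           u x = Min ((\<lambda>e. u (tgt e) + sigma H (crit_value E src tgt H) (rv e))
                        ` out_edges E src x)"
proof -
  note nok = assms(1)[unfolded network_ok_def]
  have fin: "finite E" and Ene: "E \<noteq> {}" using nok by auto
  have rvp: "\<forall>e\<in>E. rv e \<in> E \<and> rv (rv e) = e \<and> src (rv e) = tgt e \<and> tgt (rv e) = src e"
    using nok by blast
  have rv': "\<forall>e\<in>E. rv e \<in> E \<and> src (rv e) = tgt e \<and> tgt (rv e) = src e" using rvp by blast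
  have Hrv: "\<forall>e\<in>E. \<forall>s p. H (rv e) s p = H e (1 - s) (- p)" using nok by blast
  have ham: "\<And>e. e \<in> E \<Longrightarrow> ham_ok (H e)" using nok by blast
  have conn0: "\<forall>x\<in>vertices E src tgt. \<forall>y\<in>vertices E src tgt.
        (x, y) \<in> {(src e, tgt e) | e. e \<in> E}\<^sup>*" using nok by blast
  have conn: "\<forall>x\<in>vertices E src tgt. \<forall>y\<in>vertices E src tgt. \<exists>p. wk E src tgt x p y"
  proof (intro ballI)
    fix x y assume "x \<in> vertices E src tgt" "y \<in> vertices E src tgt"
    then have "(x, y) \<in> {(src e, tgt e) | e. e \<in> E}\<^sup>*" using conn0 by blast
    then show "\<exists>p. wk E src tgt x p y" by (rule reach)
  qed
  have finV: "finite (vertices E src tgt)" using fin unfolding vertices_def by simp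
  have srcV: "src ` E \<subseteq> vertices E src tgt" unfolding vertices_def by auto
  define a0 where "a0 = a_zero E src tgt H"
  define w where "w a e = sigma H a (rv e)" for a e
  have sPM: "sigma H a e = integral {0..1} (\<lambda>t. PM (H e) t a)" for a e by (simp add: sigma_def PM_def)
  define Img where "Img = (\<lambda>e. a_arc (H e)) ` {e \<in> E. src e \<noteq> tgt e} \<union> (\<lambda>e. c_arc (H e)) ` {e \<in> E. src e = tgt e}"
  have a0I: "a0 = Max Img" unfolding a0_def a_zero_def Img_def ..
  have finI: "finite Img" using fin by (auto simp: Img_def)
  have good0: "\<forall>t\<in>{0..1}. \<exists>p. H e t p \<le> a0" if eE: "e \<in> E" for e
  proof (cases "src e = tgt e")
    case True
    then have "c_arc (H e) \<in> Img" using eE unfolding Img_def by blast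
    then have le: "c_arc (H e) \<le> a0" unfolding a0I by (rule Max_ge[OF finI])
    have "\<forall>t\<in>{0..1}. \<exists>p. H e t p \<le> c_arc (H e)" by (rule cset_facts(3)[OF ham[OF eE]])
    then show ?thesis using le by (meson order_trans)
  next
    case False
    then have "a_arc (H e) \<in> Img" using eE unfolding Img_def by blast
    then have le: "a_arc (H e) \<le> a0" unfolding a0I by (rule Max_ge[OF finI])
    show ?thesis by (rule arc_good[OF ham[OF eE] le])
  qed
  have goodb: "\<forall>t\<in>{0..1}. \<exists>p. H e t p \<le> b" if eE: "e \<in> E" and b: "a0 \<le> b" for e b
    using good0[OF eE] b by (meson order_trans)
  have sig_mono: "sigma H a e \<le> sigma H b e" if eE: "e \<in> E" and a: "a0 \<le> a" and ab: "a \<le> b" for e a b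
    unfolding sPM
  proof (rule integral_le)
    show "(\<lambda>t. PM (H e) t a) integrable_on {0..1}" by (rule PM_integrable[OF ham[OF eE] goodb[OF eE a]])
    show "(\<lambda>t. PM (H e) t b) integrable_on {0..1}" using a ab
      by (intro PM_integrable[OF ham[OF eE] goodb[OF eE]]) simp
    fix t :: real assume t: "t \<in> {0..1}"
    then show "PM (H e) t a \<le> PM (H e) t b"
      using goodb[OF eE a] ab by (intro PM_mono[OF ham[OF eE] t]) auto
  qed
  have LA1: "0 \<le> W (w a) p" if D: "DFE_subsol E src tgt H a u" and wp: "wk E src tgt x p x" for a u x p
  proof -
    have "\<forall>e\<in>E. u (src e) - u (tgt e) \<le> w a e"
    proof
      fix e assume eE: "e \<in> E"
      then have "u (tgt (rv e)) - u (src (rv e)) \<le> sigma H a (rv e)"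
        using D rvp unfolding DFE_subsol_def by blast
      then show "u (src e) - u (tgt e) \<le> w a e" using rvp eE by (simp add: w_def)
    qed
    from tele[OF this wp] show ?thesis by simp
  qed
  obtain e0 where e0: "e0 \<in> E" using Ene by blast
  have x0: "src e0 \<in> vertices E src tgt" using e0 unfolding vertices_def by auto
  have LA2: "\<exists>u. DFE_subsol E src tgt H a u" if hcyc: "\<And>p x. wk E src tgt x p x \<Longrightarrow> 0 \<le> W (w a) p" for a
  proof -
    have "\<exists>u. \<forall>e\<in>E. u (tgt e) - u (src e) \<le> w a (rv e)"
      by (rule D_ex[OF rv' conn x0]) (rule hcyc)
    then obtain u where u: "\<forall>e\<in>E. u (tgt e) - u (src e) \<le> w a (rv e)" by blast
    have "DFE_subsol E src tgt H a u" unfolding DFE_subsol_def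
    proof
      fix e assume "e \<in> E"
      then show "u (tgt e) - u (src e) \<le> sigma H a e" using u rvp by (force simp: w_def)
    qed
    then show ?thesis by blast
  qed
  define A where "A = {a. a0 \<le> a \<and> (\<exists>u. DFE_subsol E src tgt H a u)}"
  define c where "c = Inf A"
  have cdef: "crit_value E src tgt H = c" unfolding crit_value_def c_def A_def a0_def ..
  have "\<forall>e\<in>E. \<exists>B. \<forall>s\<in>{0..1}. H e s 0 \<le> B"
  proof
    fix e assume eE: "e \<in> E"
    obtain B where B: "\<forall>s\<in>{0..1}. \<forall>p. \<bar>p\<bar> \<le> 0 \<longrightarrow> \<bar>H e s p\<bar> \<le> B" using ham_bdd_box[OF ham[OF eE]] by blast
    have "\<forall>s\<in>{0..1}. H e s 0 \<le> B"
    proof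
      fix s :: real assume "s \<in> {0..1}"
      then have "\<bar>H e s 0\<bar> \<le> B" using B by simp
      then show "H e s 0 \<le> B" by simp
    qed
    then show "\<exists>B. \<forall>s\<in>{0..1}. H e s 0 \<le> B" by blast
  qed
  then obtain Bf where Bf: "\<forall>e\<in>E. \<forall>s\<in>{0..1}. H e s 0 \<le> Bf e" by metis
  define a1 where "a1 = max a0 (Max (Bf ` E))"
  have a1A: "a1 \<in> A"
  proof -
    have "0 \<le> sigma H a1 e" if eE: "e \<in> E" for e
    proof -
      have ha1: "H e t 0 \<le> a1" if t: "t \<in> {0..1}" for t
      proof -
        have "Bf e \<le> Max (Bf ` E)" using fin eE by simp
        then show ?thesis using Bf eE t unfolding a1_def by force
      qed
      have g: "\<forall>t\<in>{0..1}. \<exists>p. H e t p \<le> a1" using ha1 by blast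
      show ?thesis unfolding sPM
      proof (rule integral_nonneg[OF PM_integrable[OF ham[OF eE] g]])
        fix t :: real assume t: "t \<in> {0..1}"
        show "0 \<le> PM (H e) t a1" by (rule PM_main(2)[OF ham[OF eE] t]) (use g t ha1 in auto)
      qed
    qed
    then have "DFE_subsol E src tgt H a1 (\<lambda>_. 0)" unfolding DFE_subsol_def by simp
    then show ?thesis unfolding A_def a1_def by auto
  qed
  have neA: "A \<noteq> {}" using a1A by blast
  have bddA: "bdd_below A" unfolding A_def bdd_below_def by blast
  have ca0: "a0 \<le> c" unfolding c_def by (rule cInf_greatest[OF neA]) (auto simp: A_def)
  have upA: "b \<in> A" if aA: "a \<in> A" and ab: "a \<le> b" for a b
  proof -
    obtain u where u: "DFE_subsol E src tgt H a u" and a: "a0 \<le> a" using aA unfolding A_def by blast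
    have "DFE_subsol E src tgt H b u" unfolding DFE_subsol_def
    proof
      fix e assume eE: "e \<in> E"
      then have "u (tgt e) - u (src e) \<le> sigma H a e" using u unfolding DFE_subsol_def by blast
      also have "\<dots> \<le> sigma H b e" by (rule sig_mono[OF eE a ab])
      finally show "u (tgt e) - u (src e) \<le> sigma H b e" .
    qed
    then show ?thesis using a ab unfolding A_def by auto
  qed
  have okc: "0 \<le> W (w c) p" if wp: "wk E src tgt x p x" for x p
  proof -
    define ak where "ak k = c + 1 / (real k + 1)" for k :: nat
    have aklim: "ak \<longlonglongrightarrow> c"
      unfolding ak_def using tendsto_add[OF tendsto_const LIMSEQ_inverse_real_of_nat]
      by (simp add: divide_inverse add.commute)
    have akA: "ak k \<in> A" for k
    proof -
      have "Inf A < ak k" unfolding ak_def c_def[symmetric] by (simp add: add_pos_pos)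
      then obtain a where "a \<in> A" "a < ak k" using cInf_less_iff[OF neA bddA] by blast
      then show ?thesis using upA by simp
    qed
    have pos: "0 \<le> W (w (ak k)) p" for k
      using akA[of k] LA1[OF _ wp] unfolding A_def by blast
    have "(\<lambda>k. W (w (ak k)) p) \<longlonglongrightarrow> W (w c) p"
    proof (rule tendsto_W, intro ballI)
      fix e assume "e \<in> set p"
      then have eE: "e \<in> E" using wk_set[OF wp] by blast
      then have reE: "rv e \<in> E" using rvp by blast
      show "(\<lambda>k. w (ak k) e) \<longlonglongrightarrow> w c e" unfolding w_def sPM
      proof (rule sigma_conv[OF ham[OF reE] goodb[OF reE ca0]])
        show "\<forall>t\<in>{0..1}. \<exists>p. H (rv e) t p \<le> ak k" for k
          using ca0 by (intro goodb[OF reE]) (simp add: ak_def add_increasing2)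
        show "ak k \<le> c + 1" for k by (simp add: ak_def)
        fix t :: real assume t: "t \<in> {0..1}"
        show "(\<lambda>k. PM (H (rv e)) t (ak k)) \<longlonglongrightarrow> PM (H (rv e)) t c"
          by (rule PM_right[OF ham[OF reE] t _ _ aklim]) (use goodb[OF reE ca0] t in \<open>auto simp: ak_def\<close>)
      qed
    qed
    then show ?thesis using pos by (intro LIMSEQ_le_const) auto
  qed
  have zero: "\<exists>z C. wk E src tgt z C z \<and> C \<noteq> [] \<and> W (w c) C = 0"
  proof (cases "a0 < c")
    case gt: True
    show ?thesis
    proof (rule ccontr)
      assume nz: "\<not> ?thesis"
      define S where "S = {p. set p \<subseteq> E \<and> length p \<le> card (vertices E src tgt)}"
      define T where "T = {p \<in> S. (\<exists>x. wk E src tgt x p x) \<and> p \<noteq> []}"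
      have finS: "finite S" unfolding S_def by (rule finite_lists_length_le[OF fin])
      have finT: "finite T" unfolding T_def by (rule finite_subset[OF _ finS]) blast
      have Tpos: "0 < W (w c) p" if pT: "p \<in> T" for p
      proof -
        obtain x where "wk E src tgt x p x" "p \<noteq> []" using pT unfolding T_def by blast
        then show ?thesis using okc nz by force
      qed
      define ak where "ak k = c - (c - a0) / (real k + 1)" for k :: nat
      have akge: "a0 \<le> ak k" for k
      proof -
        have "(c - a0) / (real k + 1) \<le> c - a0" using gt by (simp add: divide_le_eq)
        then show ?thesis unfolding ak_def by simp
      qed
      have aklt: "ak k < c" for k unfolding ak_def using gt by simp
      have aklim: "ak \<longlonglongrightarrow> c"
      proof -
        have "(\<lambda>k. (c - a0) / (real k + 1)) \<longlonglongrightarrow> 0" by (rule lim_div_suc)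
        from tendsto_diff[OF tendsto_const this, of c] show ?thesis unfolding ak_def by simp
      qed
      have conv: "(\<lambda>k. W (w (ak k)) p) \<longlonglongrightarrow> W (w c) p" if pT: "p \<in> T" for p
      proof (rule tendsto_W, intro ballI)
        fix e assume "e \<in> set p"
        then have eE: "e \<in> E" using pT unfolding T_def S_def by blast
        then have reE: "rv e \<in> E" using rvp by blast
        have strict: "\<forall>t\<in>{0..1}. \<exists>p. H (rv e) t p < c"
        proof
          fix t :: real assume "t \<in> {0..1}"
          then obtain q where "H (rv e) t q \<le> a0" using good0[OF reE] by blast
          then show "\<exists>p. H (rv e) t p < c" using gt by (intro exI[of _ q]) simp
        qed
        show "(\<lambda>k. w (ak k) e) \<longlonglongrightarrow> w c e" unfolding w_def sPM
        proof (rule sigma_conv[OF ham[OF reE] goodb[OF reE ca0]])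
          show "\<forall>t\<in>{0..1}. \<exists>p. H (rv e) t p \<le> ak k" for k by (rule goodb[OF reE akge])
          show "ak k \<le> c" for k using aklt[of k] by simp
          fix t :: real assume t: "t \<in> {0..1}"
          show "(\<lambda>k. PM (H (rv e)) t (ak k)) \<longlonglongrightarrow> PM (H (rv e)) t c"
          proof (rule PM_left[OF ham[OF reE] t _ _ _ aklim])
            show "\<exists>p. H (rv e) t p < c" using strict t by blast
            show "ak k \<le> c" for k using aklt[of k] by simp
            show "\<exists>p. H (rv e) t p \<le> ak k" for k using goodb[OF reE akge] t by blast
          qed
        qed
      qed
      have "\<forall>\<^sub>F k in sequentially. \<forall>p\<in>T. 0 < W (w (ak k)) p"
        by (rule eventually_ball_finite[OF finT]) (use conv Tpos order_tendstoD(1) in blast)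
      then obtain N where N: "\<forall>p\<in>T. 0 < W (w (ak N)) p" unfolding eventually_sequentially by blast
      have okN: "0 \<le> W (w (ak N)) p" if "wk E src tgt x p x" for x p
      proof (rule short_cycles[OF finV srcV _ that])
        fix p x assume wp: "wk E src tgt x p x" and lp: "length p \<le> card (vertices E src tgt)"
        show "0 \<le> W (w (ak N)) p"
        proof (cases "p = []")
          case True then show ?thesis by simp
        next
          case False
          then have "p \<in> T" using wp lp wk_set[OF wp] unfolding T_def S_def by blast
          then show ?thesis using N by fastforce
        qed
      qed
      have "\<exists>u. DFE_subsol E src tgt H (ak N) u" by (rule LA2) (rule okN)
      then have "ak N \<in> A" using akge[of N] unfolding A_def by blast
      then have "c \<le> ak N" unfolding c_def by (rule cInf_lower[OF _ bddA])
      then show False using aklt[of N] by simp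
    qed
  next
    case False
    then have eq: "c = a0" using ca0 by simp
    have neI: "Img \<noteq> {}" using e0 unfolding Img_def by blast
    have "a0 \<in> Img" unfolding a0I by (rule Max_in[OF finI neI])
    then obtain e where eE: "e \<in> E" and
      ecase: "(src e \<noteq> tgt e \<and> a0 = a_arc (H e)) \<or> (src e = tgt e \<and> a0 = c_arc (H e))"
      unfolding Img_def by blast
    have reE: "rv e \<in> E" and rre: "rv (rv e) = e" and srv: "src (rv e) = tgt e" and trv: "tgt (rv e) = src e"
      using rvp eE by auto
    have fl: "\<forall>s p. H (rv e) s p = H e (1 - s) (- p)" using Hrv eE by blast
    have arcle: "a_arc (H e) \<le> a0" by (rule good_arc[OF ham[OF eE] good0[OF eE]])
    show ?thesis
    proof (cases "a_arc (H e) = a0")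
      case True
      obtain m where m: "\<forall>s\<in>{0..1}. (INF p. H e s p) = m" using assms(2) eE True unfolding a0_def by blast
      have "a_arc (H e) = m" unfolding a_arc_def using m by simp
      then have ma0: "m = a0" using True by simp
      have flat: "\<forall>t\<in>{0..1}. \<forall>p. a0 \<le> H e t p"
        using ham_inf_le[OF ham[OF eE]] m ma0 by metis
      have "integral {0..1} (\<lambda>t. PM (H (rv e)) t a0) = - integral {0..1} (\<lambda>t. PM (H e) t a0)"
        by (rule flat_reflect[OF ham[OF eE] ham[OF reE] fl flat good0[OF eE]])
      then have ss: "sigma H c (rv e) + sigma H c e = 0" unfolding sPM eq by simp
      have "wk E src tgt (src e) [e, rv e] (src e)" using eE reE srv trv by simp
      moreover have "W (w c) [e, rv e] = 0" using ss rre by (simp add: w_def)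
      ultimately show ?thesis by blast
    next
      case False
      then have lt: "a_arc (H e) < a0" using arcle by simp
      then have closed: "src e = tgt e" and ca: "a0 = c_arc (H e)" using ecase by auto
      have w1: "wk E src tgt (src e) [e] (src e)" using eE closed by simp
      have w2: "wk E src tgt (src e) [rv e] (src e)" using reE srv trv closed by simp
      have s1: "0 \<le> sigma H c (rv e)" using okc[OF w1] by (simp add: w_def)
      have s2: "0 \<le> sigma H c e" using okc[OF w2] rre by (simp add: w_def)
      show ?thesis
      proof (cases "sigma H c (rv e) = 0 \<or> sigma H c e = 0")
        case True
        then show ?thesis
        proof
          assume "sigma H c (rv e) = 0"
          then have "W (w c) [e] = 0" by (simp add: w_def)
          then show ?thesis using w1 by blast
        next
          assume "sigma H c e = 0"
          then have "W (w c) [rv e] = 0" using rre by (simp add: w_def)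
          then show ?thesis using w2 by blast
        qed
      next
        case False
        then have p1: "0 < sigma H a0 e" and p2: "0 < sigma H a0 (rv e)" using s1 s2 eq by auto
        define d where "d = (a0 - a_arc (H e)) / 2"
        have dpos: "d > 0" using lt by (simp add: d_def)
        define ak where "ak k = a0 - d / (real k + 1)" for k :: nat
        have akgt: "a_arc (H e) < ak k" for k
        proof -
          have "d / (real k + 1) \<le> d" using dpos by (simp add: divide_le_eq)
          moreover have "d < a0 - a_arc (H e)" using lt by (simp add: d_def)
          ultimately show ?thesis unfolding ak_def by linarith
        qed
        have akle: "ak k \<le> a0" for k unfolding ak_def using dpos by simp
        have aklim: "ak \<longlonglongrightarrow> a0"
        proof -
          have "(\<lambda>k. d / (real k + 1)) \<longlonglongrightarrow> 0" by (rule lim_div_suc)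
          from tendsto_diff[OF tendsto_const this, of a0] show ?thesis unfolding ak_def by simp
        qed
        have stk: "\<forall>t\<in>{0..1}. \<exists>p. H e t p < ak k" for k by (rule arc_strict[OF ham[OF eE] akgt])
        have stk2: "\<forall>t\<in>{0..1}. \<exists>p. H (rv e) t p < ak k" for k by (rule strict_flip[OF fl stk])
        have st0: "\<forall>t\<in>{0..1}. \<exists>p. H e t p < a0" by (rule arc_strict[OF ham[OF eE] lt])
        have st02: "\<forall>t\<in>{0..1}. \<exists>p. H (rv e) t p < a0" by (rule strict_flip[OF fl st0])
        have cv: "(\<lambda>k. sigma H (ak k) f) \<longlonglongrightarrow> sigma H a0 f"
          if fE: "f \<in> E" and stf: "\<And>k. \<forall>t\<in>{0..1}. \<exists>p. H f t p < ak k"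
            and stf0: "\<forall>t\<in>{0..1}. \<exists>p. H f t p < a0" for f
          unfolding sPM
        proof (rule sigma_conv[OF ham[OF fE] goodb[OF fE order_refl]])
          show "\<forall>t\<in>{0..1}. \<exists>p. H f t p \<le> ak k" for k using stf[of k] by (meson less_imp_le)
          show "ak k \<le> a0" for k by (rule akle)
          fix t :: real assume t: "t \<in> {0..1}"
          show "(\<lambda>k. PM (H f) t (ak k)) \<longlonglongrightarrow> PM (H f) t a0"
          proof (rule PM_left[OF ham[OF fE] t _ _ _ aklim])
            show "\<exists>p. H f t p < a0" using stf0 t by blast
            show "ak k \<le> a0" for k by (rule akle)
            show "\<exists>p. H f t p \<le> ak k" for k using stf[of k] t by (meson less_imp_le)
          qed
        qed
        have ev1: "\<forall>\<^sub>F k in sequentially. 0 < sigma H (ak k) e"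
          by (rule order_tendstoD(1)[OF cv[OF eE stk st0] p1])
        have ev2: "\<forall>\<^sub>F k in sequentially. 0 < sigma H (ak k) (rv e)"
          by (rule order_tendstoD(1)[OF cv[OF reE stk2 st02] p2])
        obtain N where N1: "0 < sigma H (ak N) e" and N2: "0 < sigma H (ak N) (rv e)"
          using eventually_conj[OF ev1 ev2] unfolding eventually_sequentially by blast
        have "c_arc (H e) \<le> ak N"
          by (rule loop_lemma[OF ham[OF eE] ham[OF reE] fl stk]) (use N1 N2 in \<open>simp_all add: sPM\<close>)
        moreover have "ak N < a0" unfolding ak_def using dpos by simp
        ultimately show ?thesis using ca by simp
      qed
    qed
  qed
  then obtain z C where C: "wk E src tgt z C z" "C \<noteq> []" "W (w c) C = 0" by blast
  have "\<exists>u. \<forall>x\<in>vertices E src tgt. u x = Min ((\<lambda>e. u (tgt e) + w c e) ` out_edges E src x)"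
    by (rule D_sol[OF fin rv' conn okc C])
  then show ?thesis unfolding cdef w_def .
qed


end
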